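(* For every state $\rho\in\mathsf{St}(S)$, $\mathsf A_w(\rho)\ge \dfrac{\mathsf A_r(\rho)}{d-1}$.
   Context: $S$ is a $d$-dimensional quantum system ($d\ge2$) with non-degenerate Hamiltonian $H=\sum_i E_i|i\rangle\langle i|$, $E_1<\dots<E_d$. $\mathsf{St}(S)$ is the set of density matrices; $\mathsf P(S)$ is the set of passive states, i.e. states $\sum_i p_i|i\rangle\langle i|$ with $p_1\ge\dots\ge p_d$. Activity weight: $\mathsf A_w(\rho)=\min\{t\ge0:\ \rho=t\sigma+(1-t)\tau,\ \sigma\in\mathsf{St}(S),\ \tau\in\mathsf P(S)\}$. Robustness of activity: $\mathsf A_r(\rho)=\min\{t\ge0:\ \exists\sigma\in\mathsf{St}(S),\ (\rho+t\sigma)/(1+t)\in\mathsf P(S)\}$. *)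

theory Defs
  imports "Jordan_Normal_Form.Matrix"
begin

text \<open>Matrices are written in the energy eigenbasis |1>,...,|d> of H (indices 0..d-1),
  ordered so that E_1 < ... < E_d.\<close>

definition mtrace :: "complex mat \<Rightarrow> complex" where
  "mtrace A = (\<Sum>i<dim_row A. A $$ (i,i))"

definition is_state :: "nat \<Rightarrow> complex mat \<Rightarrow> bool" where
  "is_state d \<rho> \<longleftrightarrow> \<rho> \<in> carrier_mat d d
     \<and> (\<forall>i<d. \<forall>j<d. \<rho> $$ (j,i) = cnj (\<rho> $$ (i,j)))
     \<and> (\<forall>v \<in> carrier_vec d. conjugate v \<bullet> (\<rho> *\<^sub>v v) \<in> \<real>
                               \<and> Re (conjugate v \<bullet> (\<rho> *\<^sub>v v)) \<ge> 0)
     \<and> mtrace \<rho> = 1"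

definition is_passive :: "nat \<Rightarrow> complex mat \<Rightarrow> bool" where
  "is_passive d \<tau> \<longleftrightarrow> is_state d \<tau> \<and> diagonal_mat \<tau>
     \<and> (\<forall>i j. i \<le> j \<longrightarrow> j < d \<longrightarrow> Re (\<tau> $$ (j,j)) \<le> Re (\<tau> $$ (i,i)))"

definition activity_weight :: "nat \<Rightarrow> complex mat \<Rightarrow> real" where
  "activity_weight d \<rho> = Inf {t. t \<ge> 0 \<and> (\<exists>\<sigma> \<tau>. is_state d \<sigma> \<and> is_passive d \<tau>
      \<and> \<rho> = complex_of_real t \<cdot>\<^sub>m \<sigma> + complex_of_real (1 - t) \<cdot>\<^sub>m \<tau>)}"

definition activity_robustness :: "nat \<Rightarrow> complex mat \<Rightarrow> real" where
  "activity_robustness d \<rho> = Inf {t. t \<ge> 0 \<and> (\<exists>\<sigma>. is_state d \<sigma>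
      \<and> is_passive d (complex_of_real (1 / (1 + t)) \<cdot>\<^sub>m (\<rho> + complex_of_real t \<cdot>\<^sub>m \<sigma>)))}"

end

theory Submission
  imports Defs
begin

lemma qform:
  assumes "A \<in> carrier_mat d d" "v \<in> carrier_vec d"
  shows "conjugate v \<bullet> (A *\<^sub>v v) = (\<Sum>i<d. \<Sum>j<d. cnj (v$i) * A$$(i,j) * v$j)"
  using assms by (auto simp: scalar_prod_def mult_mat_vec_def sum_distrib_left mult.assoc atLeast0LessThan intro!: sum.cong)

lemma cplx2:
  fixes a b c :: complex
  assumes "Im a = 0" "Im b = 0"
    "\<And>x y. 0 \<le> Re (cnj x * a * x + cnj x * c * y + cnj y * cnj c * x + cnj y * b * y)"
  shows "0 \<le> Re a \<and> 0 \<le> Re b \<and> (cmod c)^2 \<le> Re a * Re b"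
proof -
  obtain p q where c: "c = Complex p q" by (cases c)
  have a: "a = complex_of_real (Re a)" using assms(1) by (simp add: complex_eq_iff)
  have b: "b = complex_of_real (Re b)" using assms(2) by (simp add: complex_eq_iff)
  define A where "A = Re a" define B where "B = Re b"
  have h1: "0 \<le> A" using assms(3)[of 1 0] by (simp add: A_def)
  have h2: "0 \<le> B" using assms(3)[of 0 1] by (simp add: B_def)
  have h3: "0 \<le> B * (A*B - (p^2+q^2))" using assms(3)[of "complex_of_real B" "- cnj c"]
    apply (subst (asm) a, subst (asm) b) by (simp add: c A_def B_def algebra_simps power2_eq_square)
  have h4: "0 \<le> A * (A*B - (p^2+q^2))" using assms(3)[of "- c" "complex_of_real A"]
    apply (subst (asm) a, subst (asm) b) by (simp add: c A_def B_def algebra_simps power2_eq_square)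
  have h5: "0 \<le> A + B*(p^2+q^2) - 2*(p^2+q^2)" using assms(3)[of 1 "- cnj c"]
    apply (subst (asm) a, subst (asm) b) by (simp add: c A_def B_def algebra_simps power2_eq_square)
  have "p^2+q^2 \<le> A*B"
  proof (cases "B > 0")
    case True then show ?thesis using h3 by (simp add: zero_le_mult_iff)
  next
    case False
    hence B0: "B = 0" using h2 by simp
    show ?thesis
    proof (cases "A > 0")
      case True then show ?thesis using h4 by (simp add: zero_le_mult_iff)
    next
      case False
      hence "A = 0" using h1 by simp
      then show ?thesis using h5 B0 by simp
    qed
  qed
  then show ?thesis using h1 h2 by (simp add: c cmod_def A_def B_def)
qed

lemma state_entry:
  assumes d2: "2 \<le> d" and st: "is_state d \<sigma>" and i: "i < d" and j: "j < d"
  shows "0 \<le> Re (\<sigma>$$(i,i)) \<and> Im (\<sigma>$$(i,i)) = 0 \<and>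
         (cmod (\<sigma>$$(i,j)))^2 \<le> Re (\<sigma>$$(i,i)) * Re (\<sigma>$$(j,j))"
proof -
  have car: "\<sigma> \<in> carrier_mat d d" and herm: "\<And>i j. i<d \<Longrightarrow> j<d \<Longrightarrow> \<sigma> $$ (j,i) = cnj (\<sigma> $$ (i,j))"
    and psd: "\<And>v. v \<in> carrier_vec d \<Longrightarrow> 0 \<le> Re (conjugate v \<bullet> (\<sigma> *\<^sub>v v))"
    using st unfolding is_state_def by blast+
  have im: "Im (\<sigma>$$(k,k)) = 0" if "k<d" for k
    using arg_cong[OF herm[OF that that], of Im] by simp
  have gen: "0 \<le> Re (\<sigma>$$(k,k)) \<and> 0 \<le> Re (\<sigma>$$(l,l)) \<and>
         (cmod (\<sigma>$$(k,l)))^2 \<le> Re (\<sigma>$$(k,k)) * Re (\<sigma>$$(l,l))"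
    if k: "k<d" and l: "l<d" and kl: "k \<noteq> l" for k l
  proof (rule cplx2[OF im[OF k] im[OF l]])
    fix x y :: complex
    define g where "g = (\<lambda>m::nat. if m = k then x else if m = l then y else 0)"
    define v where "v = vec d g"
    have vc: "v \<in> carrier_vec d" by (simp add: v_def)
    have sumkl: "(\<Sum>m<d. f m) = f k + f l" if "\<And>m. m \<noteq> k \<Longrightarrow> m \<noteq> l \<Longrightarrow> f m = 0" for f :: "nat \<Rightarrow> complex"
    proof -
      have "(\<Sum>m<d. f m) = (\<Sum>m\<in>{k,l}. f m)"
        by (rule sum.mono_neutral_right) (use k l that in auto)
      then show ?thesis using kl by simp
    qed
    have "conjugate v \<bullet> (\<sigma> *\<^sub>v v) = (\<Sum>i<d. \<Sum>j<d. cnj (v$i) * \<sigma>$$(i,j) * v$j)"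
      by (rule qform[OF car vc])
    also have "\<dots> = cnj x * \<sigma>$$(k,k) * x + cnj x * \<sigma>$$(k,l) * y + cnj y * \<sigma>$$(l,k) * x + cnj y * \<sigma>$$(l,l) * y"
    proof -
      have "(\<Sum>i<d. \<Sum>j<d. cnj (v$i) * \<sigma>$$(i,j) * v$j) = (\<Sum>i<d. \<Sum>j<d. cnj (g i) * \<sigma>$$(i,j) * g j)"
        by (simp add: v_def)
      also have "\<dots> = (\<Sum>i<d. cnj (g i) * \<sigma>$$(i,k) * g k + cnj (g i) * \<sigma>$$(i,l) * g l)"
        by (rule sum.cong[OF refl], rule sumkl) (simp add: g_def)
      also have "\<dots> = (cnj (g k) * \<sigma>$$(k,k) * g k + cnj (g k) * \<sigma>$$(k,l) * g l) + (cnj (g l) * \<sigma>$$(l,k) * g k + cnj (g l) * \<sigma>$$(l,l) * g l)"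
        by (rule sumkl) (simp add: g_def)
      finally show ?thesis using kl by (simp add: g_def)
    qed
    finally show "0 \<le> Re (cnj x * \<sigma>$$(k,k) * x + cnj x * \<sigma>$$(k,l) * y + cnj y * cnj (\<sigma>$$(k,l)) * x + cnj y * \<sigma>$$(l,l) * y)"
      using psd[OF vc] herm[OF k l] by simp
  qed
  obtain j' where j': "j' < d" "j' \<noteq> i"
  proof (cases "i = 0")
    case True
    show ?thesis using that[of 1] True d2 by auto
  next
    case False then show ?thesis using that[of 0] i by auto
  qed
  have d1: "0 \<le> Re (\<sigma>$$(i,i))" using gen[OF i j'(1)] j' by auto
  show ?thesis
  proof (cases "i = j")
    case True
    have "\<sigma>$$(i,i) = complex_of_real (Re (\<sigma>$$(i,i)))" using im[OF i] by (simp add: complex_eq_iff)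
    then have "cmod (\<sigma>$$(i,i)) = Re (\<sigma>$$(i,i))" using d1 by (metis abs_of_nonneg norm_of_real)
    then show ?thesis using True d1 im[OF i] by (simp add: power2_eq_square)
  next
    case False then show ?thesis using gen[OF i j] d1 im[OF i] by auto
  qed
qed

lemma amgm:
  fixes z X Y :: real
  assumes "0 \<le> z" "0 \<le> X" "0 \<le> Y" "z^2 \<le> X*Y"
  shows "z \<le> (X+Y)/2"
proof -
  have eq: "((X+Y)/2)^2 = X*Y + ((X-Y)/2)^2" by (simp add: power2_eq_square algebra_simps add_divide_distrib diff_divide_distrib)
  have "X*Y \<le> ((X+Y)/2)^2" unfolding eq by simp
  then have h: "z^2 \<le> ((X+Y)/2)^2" using assms(4) by linarith
  have "0 \<le> (X+Y)/2" using assms(2,3) by simp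
  then show ?thesis using power2_le_imp_le[OF h] by blast
qed

lemma state_le:
  assumes d2: "2 \<le> d" and st: "is_state d \<sigma>" and v: "v \<in> carrier_vec d"
  shows "Re (conjugate v \<bullet> (\<sigma> *\<^sub>v v)) \<le> (\<Sum>i<d. (cmod (v$i))^2)"
proof -
  have car: "\<sigma> \<in> carrier_mat d d" and tr: "mtrace \<sigma> = 1" using st unfolding is_state_def by blast+
  define a where "a = (\<lambda>i. Re (\<sigma>$$(i,i)))"
  have suma: "(\<Sum>i<d. a i) = 1"
  proof -
    have "(\<Sum>i<d. a i) = Re (mtrace \<sigma>)" using car by (simp add: mtrace_def a_def)
    then show ?thesis using tr by simp
  qed
  have "Re (conjugate v \<bullet> (\<sigma> *\<^sub>v v)) = (\<Sum>i<d. \<Sum>j<d. Re (cnj (v$i) * \<sigma>$$(i,j) * v$j))"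
    by (simp add: qform[OF car v])
  also have "\<dots> \<le> (\<Sum>i<d. \<Sum>j<d. cmod (v$i) * cmod (\<sigma>$$(i,j)) * cmod (v$j))"
  proof (intro sum_mono)
    fix i j
    show "Re (cnj (v$i) * \<sigma>$$(i,j) * v$j) \<le> cmod (v$i) * cmod (\<sigma>$$(i,j)) * cmod (v$j)"
      using complex_Re_le_cmod[of "cnj (v$i) * \<sigma>$$(i,j) * v$j"] by (simp add: norm_mult)
  qed
  also have "\<dots> \<le> (\<Sum>i<d. \<Sum>j<d. ((cmod (v$i))^2 * a j + (cmod (v$j))^2 * a i) / 2)"
  proof (intro sum_mono)
    fix i j assume i: "i \<in> {..<d}" and j: "j \<in> {..<d}"
    have e1: "0 \<le> a i" "(cmod (\<sigma>$$(i,j)))^2 \<le> a i * a j" using state_entry[OF d2 st, of i j] i j by (auto simp: a_def)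
    have e2: "0 \<le> a j" using state_entry[OF d2 st, of j j] j by (auto simp: a_def)
    have "(cmod (v$i) * cmod (\<sigma>$$(i,j)) * cmod (v$j))^2 = (cmod (v$i))^2 * (cmod (\<sigma>$$(i,j)))^2 * (cmod (v$j))^2"
      by (simp add: power_mult_distrib)
    also have "\<dots> \<le> (cmod (v$i))^2 * (a i * a j) * (cmod (v$j))^2"
      by (intro mult_right_mono mult_left_mono e1) auto
    also have "\<dots> = ((cmod (v$i))^2 * a j) * ((cmod (v$j))^2 * a i)" by simp
    finally show "cmod (v$i) * cmod (\<sigma>$$(i,j)) * cmod (v$j) \<le> ((cmod (v$i))^2 * a j + (cmod (v$j))^2 * a i) / 2"
      by (intro amgm) (use e1 e2 in auto)
  qed
  also have "\<dots> = (\<Sum>i<d. (cmod (v$i))^2) * (\<Sum>j<d. a j)"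
  proof -
    have "(\<Sum>i<d. \<Sum>j<d. ((cmod (v$i))^2 * a j + (cmod (v$j))^2 * a i) / 2)
        = ((\<Sum>i<d. \<Sum>j<d. (cmod (v$i))^2 * a j) + (\<Sum>i<d. \<Sum>j<d. (cmod (v$j))^2 * a i)) / 2"
      by (simp add: sum.distrib sum_divide_distrib add_divide_distrib)
    also have "(\<Sum>i<d. \<Sum>j<d. (cmod (v$j))^2 * a i) = (\<Sum>i<d. \<Sum>j<d. (cmod (v$i))^2 * a j)"
      by (rule sum.swap)
    also have "(\<Sum>i<d. \<Sum>j<d. (cmod (v$i))^2 * a j) = (\<Sum>i<d. (cmod (v$i))^2) * (\<Sum>j<d. a j)"
      by (simp add: sum_product)
    finally show ?thesis by simp
  qed
  finally show ?thesis using suma by simp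
qed

lemma cnj_mult_self: "cnj z * z = complex_of_real ((cmod z)^2)"
  by (metis complex_norm_square mult.commute)

lemma diag_passive_I:
  fixes M :: "complex mat" and r :: "nat \<Rightarrow> real"
  assumes car: "M \<in> carrier_mat d d"
    and off: "\<And>i j. i<d \<Longrightarrow> j<d \<Longrightarrow> i \<noteq> j \<Longrightarrow> M$$(i,j) = 0"
    and dg: "\<And>i. i<d \<Longrightarrow> M$$(i,i) = complex_of_real (r i)"
    and nn: "\<And>i. i<d \<Longrightarrow> 0 \<le> r i"
    and dec: "\<And>i j. i \<le> j \<Longrightarrow> j < d \<Longrightarrow> r j \<le> r i"
    and sm: "(\<Sum>i<d. r i) = 1"
  shows "is_passive d M"
proof -
  have herm: "\<forall>i<d. \<forall>j<d. M $$ (j,i) = cnj (M $$ (i,j))"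
  proof (intro allI impI)
    fix i j assume "i<d" "j<d"
    then show "M $$ (j,i) = cnj (M $$ (i,j))"
      by (cases "i = j") (simp_all add: dg off)
  qed
  have psd: "conjugate v \<bullet> (M *\<^sub>v v) \<in> \<real> \<and> 0 \<le> Re (conjugate v \<bullet> (M *\<^sub>v v))"
    if v: "v \<in> carrier_vec d" for v
  proof -
    have "conjugate v \<bullet> (M *\<^sub>v v) = (\<Sum>i<d. \<Sum>j<d. cnj (v$i) * M$$(i,j) * v$j)"
      by (rule qform[OF car v])
    also have "\<dots> = (\<Sum>i<d. cnj (v$i) * M$$(i,i) * v$i)"
    proof (rule sum.cong[OF refl])
      fix i assume i: "i \<in> {..<d}"
      have "(\<Sum>j<d. cnj (v$i) * M$$(i,j) * v$j) = (\<Sum>j\<in>{i}. cnj (v$i) * M$$(i,j) * v$j)"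
        by (rule sum.mono_neutral_right) (use i off in auto)
      then show "(\<Sum>j<d. cnj (v$i) * M$$(i,j) * v$j) = cnj (v$i) * M$$(i,i) * v$i" by simp
    qed
    also have "\<dots> = complex_of_real (\<Sum>i<d. r i * (cmod (v$i))^2)"
    proof -
      have "cnj (v$i) * M$$(i,i) * v$i = complex_of_real (r i * (cmod (v$i))^2)" if "i<d" for i
      proof -
        have "cnj (v$i) * M$$(i,i) * v$i = complex_of_real (r i) * (cnj (v$i) * v$i)"
          using that by (simp add: dg algebra_simps)
        also have "\<dots> = complex_of_real (r i * (cmod (v$i))^2)" by (simp only: cnj_mult_self of_real_mult)
        finally show ?thesis .
      qed
      then show ?thesis by (simp add: of_real_sum)
    qed
    finally have eq: "conjugate v \<bullet> (M *\<^sub>v v) = complex_of_real (\<Sum>i<d. r i * (cmod (v$i))^2)" .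
    have "0 \<le> (\<Sum>i<d. r i * (cmod (v$i))^2)" by (intro sum_nonneg) (simp add: nn)
    then show ?thesis unfolding eq by simp
  qed
  have tr: "mtrace M = 1"
  proof -
    have "mtrace M = (\<Sum>i<d. complex_of_real (r i))" using car by (simp add: mtrace_def dg)
    also have "\<dots> = 1" using sm by (metis of_real_1 of_real_sum)
    finally show ?thesis .
  qed
  have diag: "diagonal_mat M" using car off by (auto simp: diagonal_mat_def)
  have st: "is_state d M" unfolding is_state_def using car herm psd tr by blast
  have decM: "\<forall>i j. i \<le> j \<longrightarrow> j < d \<longrightarrow> Re (M $$ (j,j)) \<le> Re (M $$ (i,i))"
  proof (intro allI impI)
    fix i j assume ij: "i \<le> j" "j < d"
    then have "i < d" by simp
    then show "Re (M $$ (j,j)) \<le> Re (M $$ (i,i))" using dg[OF ij(2)] dg[of i] dec[OF ij] by simp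
  qed
  show ?thesis unfolding is_passive_def using st diag decM by blast
qed

lemma sigma'_state:
  assumes d2: "2 \<le> d" and st: "is_state d \<sigma>" and cpos: "0 < c" and cd: "c * (real d - 1) = 1"
  shows "is_state d (complex_of_real c \<cdot>\<^sub>m (1\<^sub>m d - \<sigma>))"
    (is "is_state d ?M")
proof -
  have car: "\<sigma> \<in> carrier_mat d d" and herm: "\<And>i j. i<d \<Longrightarrow> j<d \<Longrightarrow> \<sigma> $$ (j,i) = cnj (\<sigma> $$ (i,j))"
    and psd: "\<And>v. v \<in> carrier_vec d \<Longrightarrow> conjugate v \<bullet> (\<sigma> *\<^sub>v v) \<in> \<real>"
    and tr: "mtrace \<sigma> = 1"
    using st unfolding is_state_def by blast+
  have carM: "?M \<in> carrier_mat d d" using car by (intro smult_carrier_mat minus_carrier_mat one_carrier_mat)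
  have ent: "?M $$ (i,j) = complex_of_real c * ((if i = j then 1 else 0) - \<sigma>$$(i,j))" if "i<d" "j<d" for i j
    using that car by simp
  have hermM: "\<forall>i<d. \<forall>j<d. ?M $$ (j,i) = cnj (?M $$ (i,j))"
  proof (intro allI impI)
    fix i j assume ij: "i<d" "j<d"
    show "?M $$ (j,i) = cnj (?M $$ (i,j))" unfolding ent[OF ij] ent[OF ij(2,1)] herm[OF ij] by simp
  qed
  have psdM: "conjugate v \<bullet> (?M *\<^sub>v v) \<in> \<real> \<and> 0 \<le> Re (conjugate v \<bullet> (?M *\<^sub>v v))"
    if v: "v \<in> carrier_vec d" for v
  proof -
    define S where "S = (\<Sum>i<d. (cmod (v$i))^2)"
    define q where "q = conjugate v \<bullet> (\<sigma> *\<^sub>v v)"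
    have q: "q = (\<Sum>i<d. \<Sum>j<d. cnj (v$i) * \<sigma>$$(i,j) * v$j)" unfolding q_def by (rule qform[OF car v])
    have "conjugate v \<bullet> (?M *\<^sub>v v) = (\<Sum>i<d. \<Sum>j<d. cnj (v$i) * ?M$$(i,j) * v$j)"
      by (rule qform[OF carM v])
    also have "\<dots> = (\<Sum>i<d. complex_of_real c * (cnj (v$i) * v$i) - complex_of_real c * (\<Sum>j<d. cnj (v$i) * \<sigma>$$(i,j) * v$j))"
    proof (rule sum.cong[OF refl])
      fix i assume i: "i \<in> {..<d}"
      have "(\<Sum>j<d. cnj (v$i) * ?M$$(i,j) * v$j) = (\<Sum>j<d. complex_of_real c * ((if i = j then cnj (v$i) * v$j else 0) - cnj (v$i) * \<sigma>$$(i,j) * v$j))"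
        by (rule sum.cong[OF refl]) (use i in \<open>auto simp: ent algebra_simps\<close>)
      also have "\<dots> = complex_of_real c * (cnj (v$i) * v$i) - complex_of_real c * (\<Sum>j<d. cnj (v$i) * \<sigma>$$(i,j) * v$j)"
        using i by (simp add: sum_subtractf sum_distrib_left[symmetric] right_diff_distrib)
      finally show "(\<Sum>j<d. cnj (v$i) * ?M$$(i,j) * v$j) = complex_of_real c * (cnj (v$i) * v$i) - complex_of_real c * (\<Sum>j<d. cnj (v$i) * \<sigma>$$(i,j) * v$j)" .
    qed
    also have "\<dots> = complex_of_real c * (complex_of_real S - q)"
    proof -
      have "(\<Sum>i<d. cnj (v$i) * v$i) = complex_of_real S"
        unfolding S_def of_real_sum by (rule sum.cong[OF refl]) (simp add: cnj_mult_self)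
      then show ?thesis unfolding q by (simp add: sum_subtractf sum_distrib_left[symmetric] right_diff_distrib)
    qed
    finally have eq: "conjugate v \<bullet> (?M *\<^sub>v v) = complex_of_real c * (complex_of_real S - q)" .
    have qR: "q \<in> \<real>" unfolding q_def by (rule psd[OF v])
    have le: "Re q \<le> S" unfolding q_def S_def by (rule state_le[OF d2 st v])
    have "complex_of_real c * (complex_of_real S - q) \<in> \<real>" using qR by (intro Reals_mult Reals_diff) auto
    moreover have "0 \<le> Re (complex_of_real c * (complex_of_real S - q))"
      using le cpos by simp
    ultimately show ?thesis unfolding eq by simp
  qed
  have trM: "mtrace ?M = 1"
  proof -
    have "mtrace ?M = (\<Sum>i<d. complex_of_real c * (1 - \<sigma>$$(i,i)))" using car by (simp add: mtrace_def ent)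
    also have "\<dots> = complex_of_real c * (of_nat d - mtrace \<sigma>)"
      using car by (simp add: mtrace_def sum_subtractf sum_distrib_left[symmetric])
    also have "\<dots> = complex_of_real (c * (real d - 1))" using tr by simp
    also have "\<dots> = 1" using cd by simp
    finally show ?thesis .
  qed
  show ?thesis unfolding is_state_def using carM hermM psdM trM by blast
qed

lemma mix_passive:
  assumes d2: "2 \<le> d" and tp: "is_passive d \<tau>" and t0: "0 \<le> t" and t1: "t \<le> 1"
    and sd: "s * (1 + (real d - 1) * t) = 1"
  shows "is_passive d (complex_of_real s \<cdot>\<^sub>m (complex_of_real t \<cdot>\<^sub>m 1\<^sub>m d + complex_of_real (1-t) \<cdot>\<^sub>m \<tau>))"
    (is "is_passive d ?M")
proof -
  have st: "is_state d \<tau>" and dg: "diagonal_mat \<tau>"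
    and dec: "\<And>i j. i \<le> j \<Longrightarrow> j < d \<Longrightarrow> Re (\<tau> $$ (j,j)) \<le> Re (\<tau> $$ (i,i))"
    using tp unfolding is_passive_def by blast+
  have car: "\<tau> \<in> carrier_mat d d" and tr: "mtrace \<tau> = 1" using st unfolding is_state_def by blast+
  have pos: "0 < 1 + (real d - 1) * t" using d2 t0 by (simp add: add_pos_nonneg)
  have "s = 1 / (1 + (real d - 1) * t)" using sd pos by (simp add: eq_divide_eq)
  then have s0: "0 < s" using pos by simp
  have carM: "?M \<in> carrier_mat d d" using car by simp
  have ent: "?M $$ (i,j) = complex_of_real s * (complex_of_real t * (if i = j then 1 else 0) + complex_of_real (1-t) * \<tau>$$(i,j))"
    if "i<d" "j<d" for i j using that car by simp
  define r where "r = (\<lambda>i. s * (t + (1-t) * Re (\<tau>$$(i,i))))"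
  show ?thesis
  proof (rule diag_passive_I[OF carM, of r])
    fix i j assume ij: "i<d" "j<d" "i \<noteq> j"
    have "\<tau> $$ (i,j) = 0" using dg car ij unfolding diagonal_mat_def by auto
    then show "?M $$ (i,j) = 0" using ent[OF ij(1,2)] ij by simp
  next
    fix i assume i: "i < d"
    have "Im (\<tau>$$(i,i)) = 0" using state_entry[OF d2 st i i] by simp
    then have e: "\<tau>$$(i,i) = complex_of_real (Re (\<tau>$$(i,i)))" by (simp add: complex_eq_iff)
    have "?M $$ (i,i) = complex_of_real s * (complex_of_real t + complex_of_real (1-t) * complex_of_real (Re (\<tau>$$(i,i))))"
      unfolding ent[OF i i] by (subst e) simp
    also have "\<dots> = complex_of_real (r i)" unfolding r_def by simp
    finally show "?M $$ (i,i) = complex_of_real (r i)" .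
  next
    fix i assume i: "i < d"
    have "0 \<le> Re (\<tau>$$(i,i))" using state_entry[OF d2 st i i] by simp
    then show "0 \<le> r i" unfolding r_def using s0 t0 t1 by simp
  next
    fix i j assume ij: "i \<le> j" "j < d"
    then show "r j \<le> r i" unfolding r_def using dec[OF ij] s0 t1
      by (intro mult_left_mono add_left_mono) (simp_all add: mult_left_mono)
  next
    have sRe: "(\<Sum>i<d. Re (\<tau>$$(i,i))) = 1"
    proof -
      have "(\<Sum>i<d. Re (\<tau>$$(i,i))) = Re (mtrace \<tau>)" using car by (simp add: mtrace_def)
      then show ?thesis using tr by simp
    qed
    have "(\<Sum>i<d. r i) = s * (real d * t + (1-t) * (\<Sum>i<d. Re (\<tau>$$(i,i))))"
      unfolding r_def by (simp add: sum.distrib sum_distrib_left[symmetric])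
    also have "\<dots> = s * (1 + (real d - 1) * t)" using sRe by (simp add: algebra_simps)
    finally show "(\<Sum>i<d. r i) = 1" using sd by simp
  qed
qed

lemma core:
  assumes d2: "2 \<le> d" and s: "is_state d \<sigma>" and tp: "is_passive d \<tau>" and t0: "0 \<le> t" and t1: "t \<le> 1"
    and rho: "\<rho> = complex_of_real t \<cdot>\<^sub>m \<sigma> + complex_of_real (1 - t) \<cdot>\<^sub>m \<tau>"
  shows "(real d - 1) * t \<in> {t. t \<ge> 0 \<and> (\<exists>\<sigma>. is_state d \<sigma>
      \<and> is_passive d (complex_of_real (1 / (1 + t)) \<cdot>\<^sub>m (\<rho> + complex_of_real t \<cdot>\<^sub>m \<sigma>)))}"
proof -
  define c where "c = 1 / (real d - 1)"
  have cpos: "0 < c" and cd: "c * (real d - 1) = 1" using d2 by (auto simp: c_def)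
  define \<sigma>' where "\<sigma>' = complex_of_real c \<cdot>\<^sub>m (1\<^sub>m d - \<sigma>)"
  have s': "is_state d \<sigma>'" unfolding \<sigma>'_def by (rule sigma'_state[OF d2 s cpos cd])
  have carS: "\<sigma> \<in> carrier_mat d d" using s unfolding is_state_def by blast
  have carT: "\<tau> \<in> carrier_mat d d" using tp unfolding is_passive_def is_state_def by blast
  have key: "complex_of_real ((real d - 1) * t) * complex_of_real c = complex_of_real t"
    using cd by (metis mult.commute mult.left_commute mult_1_right of_real_mult)
  have eq: "\<rho> + complex_of_real ((real d - 1) * t) \<cdot>\<^sub>m \<sigma>' = complex_of_real t \<cdot>\<^sub>m 1\<^sub>m d + complex_of_real (1-t) \<cdot>\<^sub>m \<tau>"
  proof (rule eq_matI)
    fix i j assume "i < dim_row (complex_of_real t \<cdot>\<^sub>m 1\<^sub>m d + complex_of_real (1-t) \<cdot>\<^sub>m \<tau>)"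
       "j < dim_col (complex_of_real t \<cdot>\<^sub>m 1\<^sub>m d + complex_of_real (1-t) \<cdot>\<^sub>m \<tau>)"
    then have ij: "i < d" "j < d" using carT by auto
    have "(\<rho> + complex_of_real ((real d - 1) * t) \<cdot>\<^sub>m \<sigma>') $$ (i,j)
       = complex_of_real t * \<sigma>$$(i,j) + complex_of_real (1-t) * \<tau>$$(i,j)
         + (complex_of_real ((real d - 1) * t) * complex_of_real c) * ((if i = j then 1 else 0) - \<sigma>$$(i,j))"
      using ij carS carT unfolding rho \<sigma>'_def by (simp del: of_real_mult)
    also have "\<dots> = complex_of_real t * (if i = j then 1 else 0) + complex_of_real (1-t) * \<tau>$$(i,j)"
      unfolding key by (simp add: algebra_simps)
    also have "\<dots> = (complex_of_real t \<cdot>\<^sub>m 1\<^sub>m d + complex_of_real (1-t) \<cdot>\<^sub>m \<tau>) $$ (i,j)"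
      using ij carT by simp
    finally show "(\<rho> + complex_of_real ((real d - 1) * t) \<cdot>\<^sub>m \<sigma>') $$ (i,j) = (complex_of_real t \<cdot>\<^sub>m 1\<^sub>m d + complex_of_real (1-t) \<cdot>\<^sub>m \<tau>) $$ (i,j)" .
  qed (use carS carT in \<open>simp_all add: rho \<sigma>'_def\<close>)
  have "is_passive d (complex_of_real (1 / (1 + (real d - 1) * t)) \<cdot>\<^sub>m (complex_of_real t \<cdot>\<^sub>m 1\<^sub>m d + complex_of_real (1-t) \<cdot>\<^sub>m \<tau>))"
  proof (rule mix_passive[OF d2 tp t0 t1])
    have "0 < 1 + (real d - 1) * t" using d2 t0 by (simp add: add_pos_nonneg)
    then show "1 / (1 + (real d - 1) * t) * (1 + (real d - 1) * t) = 1" by simp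
  qed
  then have "is_passive d (complex_of_real (1 / (1 + (real d - 1) * t)) \<cdot>\<^sub>m (\<rho> + complex_of_real ((real d - 1) * t) \<cdot>\<^sub>m \<sigma>'))"
    unfolding eq .
  moreover have "0 \<le> (real d - 1) * t" using d2 t0 by simp
  ultimately show ?thesis using s' by blast
qed

lemma exists_passive:
  assumes d2: "2 \<le> d"
  shows "is_passive d (complex_of_real (1 / real d) \<cdot>\<^sub>m 1\<^sub>m d)"
  by (rule diag_passive_I[of _ d "\<lambda>_. 1 / real d"]) (use d2 in auto)

theorem mainTheorem10:
  fixes d :: nat and \<rho> :: "complex mat"
  assumes "d \<ge> 2" and "is_state d \<rho>"
  shows "activity_weight d \<rho> \<ge> activity_robustness d \<rho> / (real d - 1)"
proof -
  have d2: "2 \<le> d" using assms(1) .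
  define W where "W = {t. t \<ge> 0 \<and> (\<exists>\<sigma> \<tau>. is_state d \<sigma> \<and> is_passive d \<tau>
      \<and> \<rho> = complex_of_real t \<cdot>\<^sub>m \<sigma> + complex_of_real (1 - t) \<cdot>\<^sub>m \<tau>)}"
  define R where "R = {t. t \<ge> 0 \<and> (\<exists>\<sigma>. is_state d \<sigma>
      \<and> is_passive d (complex_of_real (1 / (1 + t)) \<cdot>\<^sub>m (\<rho> + complex_of_real t \<cdot>\<^sub>m \<sigma>)))}"
  have carR: "\<rho> \<in> carrier_mat d d" using assms(2) unfolding is_state_def by blast
  have bdd: "bdd_below R" unfolding R_def by (rule bdd_belowI[of _ 0]) auto
  have dpos: "0 < real d - 1" using d2 by simp
  have rho1: "\<rho> = complex_of_real 1 \<cdot>\<^sub>m \<rho> + complex_of_real (1 - 1) \<cdot>\<^sub>m \<tau>"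
    if "\<tau> \<in> carrier_mat d d" for \<tau>
    by (rule eq_matI) (use that carR in auto)
  have Wne: "W \<noteq> {}"
  proof -
    let ?t0 = "complex_of_real (1 / real d) \<cdot>\<^sub>m 1\<^sub>m d"
    have "is_passive d ?t0" by (rule exists_passive[OF d2])
    moreover have "?t0 \<in> carrier_mat d d" by simp
    ultimately have "1 \<in> W" unfolding W_def using assms(2) rho1 by fastforce
    then show ?thesis by blast
  qed
  have bound: "Inf R \<le> (real d - 1) * t" if t: "t \<in> W" for t
  proof -
    obtain \<sigma> \<tau> where t0: "0 \<le> t" and s: "is_state d \<sigma>" and tp: "is_passive d \<tau>"
      and rho: "\<rho> = complex_of_real t \<cdot>\<^sub>m \<sigma> + complex_of_real (1 - t) \<cdot>\<^sub>m \<tau>"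
      using t unfolding W_def by blast
    show ?thesis
    proof (cases "t \<le> 1")
      case True
      have "(real d - 1) * t \<in> R" unfolding R_def by (rule core[OF d2 s tp t0 True rho])
      then show ?thesis by (rule cInf_lower[OF _ bdd])
    next
      case False
      have carT: "\<tau> \<in> carrier_mat d d" using tp unfolding is_passive_def is_state_def by blast
      have "(real d - 1) * 1 \<in> R" unfolding R_def
        by (rule core[OF d2 assms(2) tp _ _ rho1[OF carT]]) auto
      then have "Inf R \<le> (real d - 1) * 1" by (rule cInf_lower[OF _ bdd])
      also have "\<dots> \<le> (real d - 1) * t" using False dpos by simp
      finally show ?thesis .
    qed
  qed
  have "Inf R / (real d - 1) \<le> Inf W"
  proof (rule cInf_greatest[OF Wne])
    fix t assume "t \<in> W"
    then show "Inf R / (real d - 1) \<le> t" using bound dpos by (simp add: pos_divide_le_eq mult.commute)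
  qed
  then show ?thesis unfolding activity_weight_def activity_robustness_def W_def R_def .
qed

end
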